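(* Let $n\ge 3$ and let $S$ be a double-$n$ string with diameter $d<n/2$, whose symbols are labeled $1,\dots,n$ in the order of their first occurrence in $S$. For $1\le i\le d+1$, let $r_i$ be the number of symbols $j\neq i$ such that each of the two occurrences of $j$ lies at position-distance at most $d$ from some occurrence of $i$. Then $r_i \le 3d+i-n$.
   Context: A double-$n$ string is a string of length $2n$ over an alphabet of $n$ symbols in which each symbol appears exactly twice. Positions in the string are numbered $1,\dots,2n$; the position-distance between two entries is the absolute difference of their positions. The distance between two distinct symbols is the minimum position-distance between an occurrence of the first and an occurrence of the second. The diameter of a double-$n$ string is the maximum of the distance over all pairs of distinct symbols. *)

theory Defs
  imports Main
begin

text \<open>A string of length 2n is a function s on positions 1..2n; symbols are 1..n.\<close>

definition occ :: "nat \<Rightarrow> (nat \<Rightarrow> nat) \<Rightarrow> nat \<Rightarrow> nat set" where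
  "occ n s a = {p \<in> {1..2*n}. s p = a}"

definition double_string :: "nat \<Rightarrow> (nat \<Rightarrow> nat) \<Rightarrow> bool" where
  "double_string n s \<longleftrightarrow> (\<forall>p \<in> {1..2*n}. s p \<in> {1..n}) \<and> (\<forall>a \<in> {1..n}. card (occ n s a) = 2)"

definition pdist :: "nat \<Rightarrow> nat \<Rightarrow> nat" where
  "pdist p q = nat \<bar>int p - int q\<bar>"

definition symdist :: "nat \<Rightarrow> (nat \<Rightarrow> nat) \<Rightarrow> nat \<Rightarrow> nat \<Rightarrow> nat" where
  "symdist n s a b = Min {pdist p q | p q. p \<in> occ n s a \<and> q \<in> occ n s b}"

definition diameter :: "nat \<Rightarrow> (nat \<Rightarrow> nat) \<Rightarrow> nat" where
  "diameter n s = Max {symdist n s a b | a b. a \<in> {1..n} \<and> b \<in> {1..n} \<and> a \<noteq> b}"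

definition first_occ_ordered :: "nat \<Rightarrow> (nat \<Rightarrow> nat) \<Rightarrow> bool" where
  "first_occ_ordered n s \<longleftrightarrow>
     (\<forall>a \<in> {1..n}. \<forall>b \<in> {1..n}. a < b \<longrightarrow> Min (occ n s a) < Min (occ n s b))"

definition r_count :: "nat \<Rightarrow> (nat \<Rightarrow> nat) \<Rightarrow> nat \<Rightarrow> nat \<Rightarrow> nat" where
  "r_count n s d i = card {j \<in> {1..n}. j \<noteq> i \<and>
      (\<forall>q \<in> occ n s j. \<exists>p \<in> occ n s i. pdist p q \<le> d)}"

end

theory Submission
  imports Defs
begin

lemma occ_sub: "occ n s a \<subseteq> {1..2*n}"
  unfolding occ_def by auto

lemma occ_fin: "finite (occ n s a)"
  by (rule finite_subset[OF occ_sub]) simp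

lemma occ_two:
  assumes "double_string n s" "a \<in> {1..n}"
  shows "\<exists>p q. p < q \<and> occ n s a = {p,q}"
proof -
  have "card (occ n s a) = 2" using assms unfolding double_string_def by auto
  then obtain x y where xy: "occ n s a = {x,y}" "x \<noteq> y" by (auto simp: card_2_iff)
  show ?thesis
  proof (cases "x < y")
    case True then show ?thesis using xy by blast
  next
    case False then have "y < x" using xy by auto
    then show ?thesis using xy by (intro exI[of _ y] exI[of _ x]) auto
  qed
qed

lemma occ_ne:
  assumes "double_string n s" "a \<in> {1..n}"
  shows "occ n s a \<noteq> {}"
  using occ_two[OF assms] by auto

lemma close:
  assumes ds: "double_string n s" and a: "a \<in> {1..n}" and b: "b \<in> {1..n}" and ab: "a \<noteq> b"
  shows "\<exists>p\<in>occ n s a. \<exists>q\<in>occ n s b. pdist p q \<le> diameter n s"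
proof -
  let ?D = "{symdist n s a b | a b. a \<in> {1..n} \<and> b \<in> {1..n} \<and> a \<noteq> b}"
  have "?D \<subseteq> (\<lambda>(a,b). symdist n s a b) ` ({1..n} \<times> {1..n})" by auto
  then have fD: "finite ?D" by (rule finite_subset) auto
  have le: "symdist n s a b \<le> diameter n s"
    unfolding diameter_def using a b ab fD by (intro Max_ge) auto
  let ?P = "{pdist p q | p q. p \<in> occ n s a \<and> q \<in> occ n s b}"
  have "?P \<subseteq> (\<lambda>(p,q). pdist p q) ` (occ n s a \<times> occ n s b)" by auto
  then have fP: "finite ?P" by (rule finite_subset) (auto simp: occ_fin)
  have neP: "?P \<noteq> {}" using occ_ne[OF ds a] occ_ne[OF ds b] by blast
  have "symdist n s a b \<in> ?P" unfolding symdist_def using Min_in[OF fP neP] .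
  then obtain p q where pq: "p \<in> occ n s a" "q \<in> occ n s b" "pdist p q = symdist n s a b" by auto
  have "pdist p q \<le> diameter n s" using pq(3) le by simp
  then show ?thesis using pq(1,2) by blast
qed

theorem lemma3p4:
  fixes n d i :: nat and s :: "nat \<Rightarrow> nat"
  assumes "n \<ge> 3"
    and "double_string n s"
    and "first_occ_ordered n s"
    and "d = diameter n s"
    and "2 * d < n"
    and "1 \<le> i" and "i \<le> d + 1"
  shows "int (r_count n s d i) \<le> 3 * int d + int i - int n"
proof -
  note ds = assms(2) and fo = assms(3)
  have iN: "i \<in> {1..n}" using assms by auto
  obtain p1 p2 where p12: "p1 < p2" "occ n s i = {p1,p2}" using occ_two[OF ds iN] by blast
  have p1min: "Min (occ n s i) = p1" using p12 by auto
  have symb: "s p \<in> {1..n}" if "p \<in> {1..2*n}" for p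
    using ds that unfolding double_string_def by auto
  have pocc: "p \<in> occ n s (s p)" if "p \<in> {1..2*n}" for p
    using that unfolding occ_def by auto
  have p1r: "p1 \<in> {1..2*n}" using p12 occ_sub by blast
  have before: "s p < i" if "p \<in> {1..2*n}" "p < p1" for p
  proof (rule ccontr)
    assume "\<not> s p < i"
    moreover have "s p \<noteq> i" using that p12 pocc[OF that(1)] by (metis Min_le occ_fin p1min not_le)
    ultimately have "i < s p" by auto
    then have "Min (occ n s i) < Min (occ n s (s p))" using fo iN symb[OF that(1)]
      unfolding first_occ_ordered_def by auto
    moreover have "Min (occ n s (s p)) \<le> p" using pocc[OF that(1)] occ_fin by (rule Min_le[rotated])
    ultimately show False using that p1min by auto
  qed
  have norep: "s p \<noteq> s q" if "p \<in> {1..2*n}" "q \<in> {1..2*n}" "p < q" "q < p1" for p q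
  proof
    assume eq: "s p = s q"
    define j where "j = s p"
    have jN: "j \<in> {1..n}" using symb that j_def by auto
    have pq1: "p \<in> occ n s j" using pocc[OF that(1)] j_def by simp
    have pq2: "q \<in> occ n s j" using pocc[OF that(2)] eq j_def by simp
    note pq = pq1 pq2
    obtain u v where uv: "u < v" "occ n s j = {u,v}" using occ_two[OF ds jN] by blast
    have occj: "occ n s j = {p,q}" using uv pq that(3) by auto
    have ji: "j < i" using before that j_def by auto
    have "\<forall>k\<in>{i+1..n}. \<exists>y. y \<in> {p1<..<p1+d} \<and> s y = k"
    proof
      fix k assume k: "k \<in> {i+1..n}"
      then have kN: "k \<in> {1..n}" by auto
      have "j \<noteq> k" using ji k by auto
      then obtain x y where xy: "x \<in> occ n s j" "y \<in> occ n s k" "pdist x y \<le> d"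
        using close[OF ds jN kN] assms(4) by blast
      have "Min (occ n s i) < Min (occ n s k)" using fo iN kN k
        unfolding first_occ_ordered_def by auto
      moreover have "Min (occ n s k) \<le> y" using xy(2) occ_fin by (rule Min_le[rotated])
      ultimately have y1: "p1 < y" using p1min by auto
      have "x \<le> q" using xy(1) occj that by auto
      then have "y \<le> x + d" using xy(3) y1 that unfolding pdist_def by auto
      then have "y < p1 + d" using \<open>x \<le> q\<close> that by auto
      moreover have "s y = k" using xy(2) unfolding occ_def by auto
      ultimately show "\<exists>y. y \<in> {p1<..<p1+d} \<and> s y = k" using y1 by auto
    qed
    then have "{i+1..n} \<subseteq> s ` {p1<..<p1+d}"
    proof (intro subsetI)
      fix k assume H: "\<forall>k\<in>{i+1..n}. \<exists>y. y \<in> {p1<..<p1+d} \<and> s y = k" "k \<in> {i+1..n}"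
      then obtain y where "y \<in> {p1<..<p1+d}" "s y = k" by blast
      then show "k \<in> s ` {p1<..<p1+d}" by (metis rev_image_eqI)
    qed
    then have "card {i+1..n} \<le> card (s ` {p1<..<p1+d})" by (intro card_mono) auto
    also have "\<dots> \<le> card {p1<..<p1+d}" by (rule card_image_le) auto
    finally have "n - i \<le> d - 1" by simp
    then show False using assms by linarith
  qed
  have p1le: "p1 \<le> i"
  proof -
    have inj: "inj_on s {1..<p1}"
    proof (rule inj_onI)
      fix p q assume pq: "p \<in> {1..<p1}" "q \<in> {1..<p1}" "s p = s q"
      have r: "p \<in> {1..2*n}" "q \<in> {1..2*n}" using pq p1r by auto
      show "p = q"
      proof (rule ccontr)
        assume "p \<noteq> q"
        then have "p < q \<or> q < p" by auto
        then show False using norep r pq by (metis atLeastLessThan_iff)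
      qed
    qed
    have "s ` {1..<p1} \<subseteq> {1..<i}" using before symb p1r by fastforce
    then have "card (s ` {1..<p1}) \<le> card {1..<i}" by (intro card_mono) auto
    then have "card {1..<p1} \<le> card {1..<i}" using card_image[OF inj] by simp
    then have "p1 - 1 \<le> i - 1" by simp
    then show ?thesis using p1r assms(6) by simp
  qed
  define N where "N = {q \<in> {1..2*n}. \<exists>p\<in>occ n s i. pdist p q \<le> d}"
  define R where "R = {j \<in> {1..n}. j \<noteq> i \<and> (\<forall>q \<in> occ n s j. \<exists>p \<in> occ n s i. pdist p q \<le> d)}"
  have rc: "r_count n s d i = card R" unfolding r_count_def R_def ..
  have Nsub: "N \<subseteq> {1..<p1} \<union> {p1..p1+d} \<union> {p2-d..p2+d}"
  proof
    fix q assume "q \<in> N"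
    then obtain p where "q \<in> {1..2*n}" "p \<in> {p1,p2}" "pdist p q \<le> d" unfolding N_def using p12 by auto
    then show "q \<in> {1..<p1} \<union> {p1..p1+d} \<union> {p2-d..p2+d}" unfolding pdist_def by auto
  qed
  have "card N \<le> card ({1..<p1} \<union> {p1..p1+d} \<union> {p2-d..p2+d})"
    using Nsub by (intro card_mono) auto
  also have "\<dots> \<le> card {1..<p1} + card {p1..p1+d} + card {p2-d..p2+d}"
    by (meson add_mono card_Un_le le_trans order_refl)
  also have "\<dots> \<le> (i - 1) + (d + 1) + (2*d+1)" using p1le by simp
  finally have Nup: "card N \<le> (i - 1) + (d + 1) + (2*d+1)" .
  have fN: "finite N" unfolding N_def by auto
  have Nun: "N = (\<Union>a\<in>{1..n}. N \<inter> occ n s a)"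
  proof
    show "N \<subseteq> (\<Union>a\<in>{1..n}. N \<inter> occ n s a)"
    proof
      fix q assume q: "q \<in> N"
      then have "q \<in> {1..2*n}" unfolding N_def by auto
      then show "q \<in> (\<Union>a\<in>{1..n}. N \<inter> occ n s a)" using q symb pocc by blast
    qed
  qed auto
  have "card N = (\<Sum>a\<in>{1..n}. card (N \<inter> occ n s a))"
    by (subst Nun, rule card_UN_disjoint) (auto simp: occ_def fN)
  moreover have "(\<Sum>a\<in>{1..n}. card (N \<inter> occ n s a)) \<ge> (\<Sum>a\<in>{1..n}. (1::nat) + (if a \<in> insert i R then 1 else 0))"
  proof (rule sum_mono)
    fix a assume aN: "a \<in> {1..n}"
    show "1 + (if a \<in> insert i R then 1 else 0) \<le> card (N \<inter> occ n s a)"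
    proof (cases "a \<in> insert i R")
      case True
      then have "occ n s a \<subseteq> N"
      proof
        assume "a = i"
        have "\<exists>p\<in>occ n s i. pdist p x \<le> d" if "x \<in> occ n s i" for x
          using that by (intro bexI[of _ x]) (auto simp: pdist_def)
        then show ?thesis unfolding N_def using occ_sub[of n s i] \<open>a = i\<close> by auto
      next
        assume "a \<in> R"
        then show ?thesis unfolding N_def R_def using occ_sub[of n s a] by auto
      qed
      then have "N \<inter> occ n s a = occ n s a" by auto
      moreover have "card (occ n s a) = 2" using ds aN unfolding double_string_def by auto
      ultimately show ?thesis using True by simp
    next
      case False
      then have "a \<noteq> i" by auto
      then obtain p q where pq: "p \<in> occ n s i" "q \<in> occ n s a" "pdist p q \<le> d"
        using close[OF ds iN aN] assms(4) by blast
      then have "q \<in> N \<inter> occ n s a" unfolding N_def using occ_sub by blast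
      then have "card (N \<inter> occ n s a) \<ge> 1"
        using occ_fin[of n s a] by (metis One_nat_def Suc_leI card_gt_0_iff empty_iff finite_Int)
      then show ?thesis using False by simp
    qed
  qed
  moreover have "(\<Sum>a\<in>{1..n}. (1::nat) + (if a \<in> insert i R then 1 else 0)) = n + card (insert i R)"
  proof -
    have sub: "insert i R \<subseteq> {1..n}" using iN unfolding R_def by auto
    have "(\<Sum>a\<in>{1..n}. (1::nat) + (if a \<in> insert i R then 1 else 0))
        = n + (\<Sum>a\<in>{1..n}. (if a \<in> insert i R then 1 else 0))" by (simp only: sum.distrib) simp
    also have "(\<Sum>a\<in>{1..n}. (if a \<in> insert i R then 1::nat else 0)) = card ({1..n} \<inter> insert i R)"
      by (simp only: sum.If_cases[OF finite_atLeastAtMost] Collect_mem_eq) simp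
    also have "{1..n} \<inter> insert i R = insert i R" using sub by auto
    finally show ?thesis .
  qed
  moreover have "card (insert i R) = card R + 1"
  proof -
    have "finite R" unfolding R_def by auto
    moreover have "i \<notin> R" unfolding R_def by auto
    ultimately show ?thesis by simp
  qed
  ultimately have "n + card R + 1 \<le> (i - 1) + (d + 1) + (2*d+1)" using Nup by linarith
  then show ?thesis using rc assms by linarith
qed

end
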